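(* Let $k\ge2$ be an integer and let $\{F_n(k)\}$ be the $k$-bonacci sequence: $F_0(k)=\dots=F_{k-2}(k)=0$, $F_{k-1}(k)=1$, and $F_{n+k}(k)=\sum_{l=0}^{k-1}F_{n+l}(k)$ for $n\ge0$. Then \[ \{F_n(k)\}=\sum_{l=0}^{\infty}(\tilde{\mathcal{I}}_k)^l\, I_0^{\,k-1+l}\{1\}, \] the sum being taken termwise (for each index only finitely many summands are nonzero).
   Context: Sequences are indexed by $n=0,1,2,\dots$; sums are termwise and $\{1\}=1,1,1,\dots$. The insertion operator is $I_0\{a_n\}=0,a_0,a_1,\dots$, $I_0^j$ its $j$-fold application ($I_0^0$ the identity). The left integral is $\mathcal{I}_L^0\{a_n\}=\{\sum_{j=0}^{n-1}a_j\}$ (empty sum $=0$). The deformed integral is the operator $\tilde{\mathcal{I}}_k=\sum_{l=0}^{k-2}I_0^l\,\mathcal{I}_L^0$, and $(\tilde{\mathcal{I}}_k)^l$ its $l$-fold application. *)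

theory Defs
  imports Main
begin

type_synonym seq = "nat \<Rightarrow> int"

definition I0 :: "seq \<Rightarrow> seq" where
  "I0 a n = (if n = 0 then 0 else a (n - 1))"

definition IL :: "seq \<Rightarrow> seq" where
  "IL a n = (\<Sum>j<n. a j)"

definition Itilde :: "nat \<Rightarrow> seq \<Rightarrow> seq" where
  "Itilde k a n = (\<Sum>l\<in>{0..k-2}. (I0 ^^ l) (IL a) n)"

definition kterm :: "nat \<Rightarrow> nat \<Rightarrow> seq" where
  "kterm k l = (Itilde k ^^ l) ((I0 ^^ (k - 1 + l)) (\<lambda>_. 1))"

end

theory Submission
  imports Defs
begin

lemma I0_pow: "(I0 ^^ l) c n = (if n < l then 0 else c (n - l))"
proof (induction l arbitrary: n)
  case 0 then show ?case by simp
next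
  case (Suc l) then show ?case by (auto simp: I0_def)
qed

lemma IL_I0_pt: "IL (I0 a) n = I0 (IL a) n"
proof (cases n)
  case 0 thus ?thesis by (simp add: IL_def I0_def)
next
  case (Suc m)
  have "IL (I0 a) n = I0 a 0 + (\<Sum>j<m. I0 a (Suc j))"
    unfolding IL_def Suc by (rule sum.lessThan_Suc_shift)
  thus ?thesis using Suc by (simp add: I0_def IL_def)
qed

lemma IL_I0: "IL (I0 a) = I0 (IL a)"
  using IL_I0_pt by blast

lemma Itilde_I0: "Itilde k (I0 a) = I0 (Itilde k a)"
proof
  fix n
  show "Itilde k (I0 a) n = I0 (Itilde k a) n"
  proof (cases n)
    case 0 thus ?thesis unfolding Itilde_def I0_pow IL_I0 by (auto simp: I0_def intro!: sum.neutral)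
  next
    case (Suc m)
    thus ?thesis unfolding Itilde_def I0_pow IL_I0
      by (auto simp: I0_def intro!: sum.cong)
  qed
qed

lemma funpow_commute: "(Itilde k ^^ l) (I0 a) = I0 ((Itilde k ^^ l) a)"
  by (induction l) (simp_all add: Itilde_I0)

lemma kterm_Suc: "kterm k (Suc l) = Itilde k (I0 (kterm k l))"
  unfolding kterm_def by (simp add: funpow_commute)

lemma TI_add: "Itilde k (I0 (\<lambda>m. a m + b m)) n = Itilde k (I0 a) n + Itilde k (I0 b) n"
proof -
  have 1: "I0 (\<lambda>m. a m + b m) = (\<lambda>j. I0 a j + I0 b j)"
    by (auto simp: I0_def)
  have 2: "IL (\<lambda>j. I0 a j + I0 b j) = (\<lambda>j. IL (I0 a) j + IL (I0 b) j)"
    by (auto simp: IL_def sum.distrib)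
  show ?thesis unfolding Itilde_def I0_pow 1 2
    by (auto simp: sum.distrib[symmetric] intro!: sum.cong)
qed

lemma TI_sum: "Itilde k (I0 (\<lambda>m. \<Sum>l<(N::nat). f l m)) n = (\<Sum>l<N. Itilde k (I0 (f l)) n)"
proof (induction N arbitrary: n)
  case 0 thus ?case unfolding Itilde_def I0_pow IL_def I0_def by (auto intro!: sum.neutral)
next
  case (Suc N)
  have "(\<lambda>m. \<Sum>l<Suc N. f l m) = (\<lambda>m. (\<Sum>l<N. f l m) + f N m)" by simp
  thus ?case using Suc TI_add by simp
qed

lemma TI_local: "\<forall>j<n. a j = b j \<Longrightarrow> m \<le> n \<Longrightarrow> Itilde k (I0 a) m = Itilde k (I0 b) m"
  unfolding Itilde_def I0_pow IL_def
  by (auto simp: I0_def intro!: sum.cong)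

lemma TI_vanish: "\<forall>j<m. a j = 0 \<Longrightarrow> n < Suc m \<Longrightarrow> Itilde k (I0 a) n = 0"
  unfolding Itilde_def I0_pow IL_def
  by (auto simp: I0_def intro!: sum.neutral)

lemma kterm_vanish: "n < k - 1 + l \<Longrightarrow> kterm k l n = 0"
proof (induction l arbitrary: n)
  case 0 thus ?case by (simp add: kterm_def I0_pow)
next
  case (Suc l)
  have "\<forall>j<k - 1 + l. kterm k l j = 0" using Suc.IH by blast
  thus ?case unfolding kterm_Suc using Suc.prems by (intro TI_vanish) auto
qed

lemma kterm0: "kterm k 0 n = (if n < k - 1 then 0 else 1)"
  by (simp add: kterm_def I0_pow)

lemma TI_expand: "k = Suc (Suc p) \<Longrightarrow> Itilde k (I0 a) n = (\<Sum>l\<in>{0..p}. IL (I0 a) (n - l))"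
  unfolding Itilde_def I0_pow
  by (auto simp: IL_def I0_def intro!: sum.cong)

lemma Frec:
  assumes k: "k = Suc (Suc p)"
    and z: "\<forall>i < k - 1. F i = 0"
    and o: "F (k - 1) = 1"
    and r: "\<forall>n. F (n + k) = (\<Sum>l<k. F (n + l))"
  shows "F n = kterm k 0 n + Itilde k (I0 F) n"
proof -
  have low: "Itilde k (I0 F) n = 0" if "n \<le> Suc p" for n
    using z k that by (intro TI_vanish[of "Suc p"]) auto
  show ?thesis
  proof (cases "n \<le> Suc p")
    case True
    thus ?thesis using low z o k by (cases "n = Suc p") (auto simp: kterm0)
  next
    case False
    define d where "d = n - Suc p"
    have nd: "n = Suc p + d" using False d_def by simp
    have "F (Suc p + d) = kterm k 0 (Suc p + d) + Itilde k (I0 F) (Suc p + d)"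
    proof (induction d)
      case 0 thus ?case using low o k by (simp add: kterm0)
    next
      case (Suc d)
      define n where "n = Suc p + d"
      have A: "Itilde k (I0 F) (Suc n) = Itilde k (I0 F) n + (\<Sum>l\<in>{0..p}. F (n - l - 1))"
      proof -
        have "Itilde k (I0 F) (Suc n) = (\<Sum>l\<in>{0..p}. IL (I0 F) (Suc n - l))"
          using TI_expand[OF k] by blast
        also have "\<dots> = (\<Sum>l\<in>{0..p}. IL (I0 F) (n - l) + F (n - l - 1))"
        proof (rule sum.cong)
          fix l assume "l \<in> {0..p}"
          hence "Suc n - l = Suc (n - l)" "n - l \<noteq> 0" using n_def by auto
          thus "IL (I0 F) (Suc n - l) = IL (I0 F) (n - l) + F (n - l - 1)"
            by (simp add: IL_def I0_def)
        qed simp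
        also have "\<dots> = Itilde k (I0 F) n + (\<Sum>l\<in>{0..p}. F (n - l - 1))"
          using TI_expand[OF k] by (simp add: sum.distrib)
        finally show ?thesis .
      qed
      have B: "F (Suc n) = F n + (\<Sum>l\<in>{0..p}. F (n - l - 1))"
      proof -
        have "F (Suc n) = F (d + k)" using n_def k by (simp add: add_ac)
        also have "\<dots> = (\<Sum>l<Suc (Suc p). F (d + l))" using r k by simp
        also have "\<dots> = (\<Sum>l<Suc p. F (d + l)) + F n" using n_def by (simp add: add_ac)
        also have "(\<Sum>l<Suc p. F (d + l)) = (\<Sum>l<Suc p. F (d + (Suc p - Suc l)))"
          by (rule sum.nat_diff_reindex[symmetric])
        also have "\<dots> = (\<Sum>l<Suc p. F (n - l - 1))"
          by (rule sum.cong) (simp_all add: n_def add.commute)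
        also have "\<dots> = (\<Sum>l\<in>{0..p}. F (n - l - 1))"
          by (simp only: atLeast0AtMost lessThan_Suc_atMost)
        finally show ?thesis by simp
      qed
      have C: "kterm k 0 (Suc n) = kterm k 0 n" using n_def k by (simp add: kterm0)
      have "F n = kterm k 0 n + Itilde k (I0 F) n" using Suc n_def by simp
      hence "F (Suc n) = kterm k 0 (Suc n) + Itilde k (I0 F) (Suc n)"
        using A B C by simp
      thus ?case using n_def by simp
    qed
    thus ?thesis using nd by simp
  qed
qed

theorem mainTheorem17:
  fixes k :: nat and F :: "nat \<Rightarrow> int"
  assumes "k \<ge> 2"
    and "\<forall>i < k - 1. F i = 0"
    and "F (k - 1) = 1"
    and "\<forall>n. F (n + k) = (\<Sum>l<k. F (n + l))"
  shows "\<forall>n. finite {l. kterm k l n \<noteq> 0} \<and>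
              F n = (\<Sum>l\<in>{l. kterm k l n \<noteq> 0}. kterm k l n)"
proof -
  obtain p where k: "k = Suc (Suc p)" using assms(1) by (metis add_2_eq_Suc le_Suc_ex)
  have S: "\<forall>n<N. (\<Sum>l<N. kterm k l n) = F n" for N
  proof (induction N)
    case 0 thus ?case by simp
  next
    case (Suc N)
    show ?case
    proof (intro allI impI)
      fix n assume n: "n < Suc N"
      have "(\<Sum>l<Suc N. kterm k l n) = kterm k 0 n + (\<Sum>l<N. kterm k (Suc l) n)"
        by (rule sum.lessThan_Suc_shift)
      also have "\<dots> = kterm k 0 n + Itilde k (I0 (\<lambda>m. \<Sum>l<N. kterm k l m)) n"
        by (simp add: kterm_Suc TI_sum)
      also have "\<dots> = kterm k 0 n + Itilde k (I0 F) n"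
        using Suc.IH n by (subst TI_local[of N _ F]) auto
      also have "\<dots> = F n" by (rule Frec[OF k assms(2-4), symmetric])
      finally show "(\<Sum>l<Suc N. kterm k l n) = F n" .
    qed
  qed
  show ?thesis
  proof
    fix n
    have sub: "{l. kterm k l n \<noteq> 0} \<subseteq> {..<Suc n}"
    proof
      fix l assume "l \<in> {l. kterm k l n \<noteq> 0}"
      hence "\<not> n < k - 1 + l" using kterm_vanish by auto
      thus "l \<in> {..<Suc n}" using k by simp
    qed
    have fin: "finite {l. kterm k l n \<noteq> 0}" using sub finite_subset by blast
    have "(\<Sum>l\<in>{l. kterm k l n \<noteq> 0}. kterm k l n) = (\<Sum>l<Suc n. kterm k l n)"
      by (rule sum.mono_neutral_left) (use sub in auto)
    thus "finite {l. kterm k l n \<noteq> 0} \<and> F n = (\<Sum>l\<in>{l. kterm k l n \<noteq> 0}. kterm k l n)"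
      using fin S[of "Suc n"] by simp
  qed
qed

end
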